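(* Let $Q$ be a graph consisting of a single vertex $v$ and a single loop edge, and let $X$ be a locally standard $T^m$-pseudomanifold over $Q$ (i.e. with $l=0$, $n=1$ and orbit space $Q$, the vertex being the $0$-stratum and the open loop the $1$-stratum), with orbit projection $\pi:X\to Q$. Then there exists a continuous section $s:Q\to X$ of $\pi$, i.e. $\pi\circ s=\mathrm{id}_Q$.
   Context: Notation: $U(1)=\{z\in\mathbb C:|z|=1\}$, $T^m=U(1)^m$, $\mathbb C^\times=\mathbb C\setminus\{0\}$, open cone $\mathring c(L)=L\times[0,1)/(L\times\{0\})$ ($\mathring c(\emptyset)$ a point). A topological stratified pseudomanifold is a Hausdorff space $Q$ with closed filtration $Q=Q_{l+n}\supsetneq\cdots\supsetneq Q_l\supsetneq\emptyset$ whose strata (components of $Q_i\setminus Q_{i-1}$) are $i$-manifolds, with $\mathring Q=Q_{l+n}\setminus Q_{l+n-1}$ dense, and each point $p$ of an $(l+i)$-stratum having a filtration-preserving neighborhood $O\times\mathring c(L_p)$, $O\subset\mathbb R^{l+i}$ contractible open, $L_p$ a compact $(n-i-1)$-dimensional topological stratified pseudomanifold (the link). Locally standard $T^m$-pseudomanifold $X$ (dimension $l+m+n$, $l\ge0$, $m\ge n\ge0$): a second-countable compact Hausdorff space with effective continuous $T^m$-action with subtorus isotropy groups, filtered by $X_{l+2i+(m-n)}=X_{l+2i+1+(m-n)}=\{x:\dim T^mx\le i+m-n\}$ ($0\le i\le n$), which is a topological stratified pseudomanifold with no orbits of dimension $<m-n$ and with free orbits if $l+n\ne0$, and inductively: if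 $l+n=0$, $X$ is a finite disjoint union of copies of $T^m$; otherwise each $x\in X_{l+2i+(m-n)}\setminus X_{l+2(i-1)+(m-n)}$ has an invariant open neighborhood weakly equivariantly homeomorphic to $O\times(\Omega\times U(1)^{m-n})\times\mathring c(L_x)$ with $O\subset\mathbb R^l$ contractible open, $\Omega\subset(\mathbb C^\times)^i$ invariant open, $L_x$ a compact $(2n-2i-1)$-dimensional locally standard $T_x$-pseudomanifold ($T_x\cong T^{n-i}$ the isotropy group), $T^m\cong U(1)^{i+m-n}\times T_x$ acting freely on the middle factor and via $L_x$ on the cone. The orbit space $Q=X/T^m$ with filtration $Q_{l+i}=X_{l+2i+(m-n)}/T^m$ is a topological stratified pseudomanifold of dimension $l+n$. When $l=0,n=1$, $Q$ is a finite graph (vertices $=$ $0$-strata, open edges $=$ $1$-strata), and $X$ is called a locally standard $T^m$-pseudomanifold over a graph; isotropy is a $1$-dimensional subtorus over vertices and trivial over open edges. *)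

theory Defs
  imports "HOL-Analysis.Analysis"
begin

definition torus :: "nat \<Rightarrow> (nat \<Rightarrow> complex) set" where
  "torus m = {t. (\<forall>i<m. cmod (t i) = 1) \<and> (\<forall>i\<ge>m. t i = 1)}"

definition cfun_top :: "(nat \<Rightarrow> complex) topology" where
  "cfun_top = product_topology (\<lambda>_. euclidean) UNIV"

definition torus_top :: "nat \<Rightarrow> (nat \<Rightarrow> complex) topology" where
  "torus_top m = subtopology cfun_top (torus m)"

definition tmult :: "(nat \<Rightarrow> complex) \<Rightarrow> (nat \<Rightarrow> complex) \<Rightarrow> (nat \<Rightarrow> complex)" where
  "tmult s t = (\<lambda>i. s i * t i)"

definition tone :: "nat \<Rightarrow> complex" where
  "tone = (\<lambda>_. 1)"

text \<open>Continuous automorphisms of T^m (used for weak equivariance).\<close>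
definition torus_aut :: "nat \<Rightarrow> ((nat \<Rightarrow> complex) \<Rightarrow> (nat \<Rightarrow> complex)) \<Rightarrow> bool" where
  "torus_aut m \<phi> \<longleftrightarrow> homeomorphic_map (torus_top m) (torus_top m) \<phi> \<and>
     (\<forall>s\<in>torus m. \<forall>t\<in>torus m. \<phi> (tmult s t) = tmult (\<phi> s) (\<phi> t))"

definition isotropy :: "nat \<Rightarrow> ((nat \<Rightarrow> complex) \<Rightarrow> 'a \<Rightarrow> 'a) \<Rightarrow> 'a \<Rightarrow> (nat \<Rightarrow> complex) set" where
  "isotropy m act x = {t \<in> torus m. act t x = x}"

text \<open>Local model over an open edge (l=0, n=1, i=1):
  Omega x U(1)^(m-1), Omega an open U(1)-invariant subset of C^x.
  Coordinate 0 carries Omega, coordinates 1..m-1 carry U(1)^(m-1);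
  T^m acts by coordinatewise multiplication (freely).\<close>
definition free_model :: "nat \<Rightarrow> complex set \<Rightarrow> (nat \<Rightarrow> complex) set" where
  "free_model m \<Omega> = {p. p 0 \<in> \<Omega> \<and> (\<forall>i. 1 \<le> i \<and> i < m \<longrightarrow> cmod (p i) = 1) \<and> (\<forall>i\<ge>m. p i = 1)}"

text \<open>Local model over a vertex (l=0, n=1, i=0):
  U(1)^(m-1) x open cone on the link L_x, where L_x is a finite disjoint union
  of k circles (a 1-dimensional locally standard T_x-pseudomanifold with T_x = U(1)).
  The open cone on k circles is realised in C^k as the vectors with at most one
  nonzero coordinate, all coordinates of modulus < 1 (apex = 0).
  Coordinate 0 of T^m acts on the cone by scalar multiplication
  (this is T_x), coordinates 1..m-1 act on U(1)^(m-1).\<close>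
definition vertex_model :: "nat \<Rightarrow> nat \<Rightarrow> ((nat \<Rightarrow> complex) \<times> (nat \<Rightarrow> complex)) set" where
  "vertex_model m k = {(u, w). u 0 = 1 \<and> (\<forall>i. 1 \<le> i \<and> i < m \<longrightarrow> cmod (u i) = 1) \<and> (\<forall>i\<ge>m. u i = 1) \<and>
      (\<forall>j\<ge>k. w j = 0) \<and> (\<forall>j. cmod (w j) < 1) \<and> (\<forall>j j'. w j \<noteq> 0 \<and> w j' \<noteq> 0 \<longrightarrow> j = j')}"

definition vertex_act :: "(nat \<Rightarrow> complex) \<Rightarrow> (nat \<Rightarrow> complex) \<times> (nat \<Rightarrow> complex) \<Rightarrow> (nat \<Rightarrow> complex) \<times> (nat \<Rightarrow> complex)" where
  "vertex_act t p = ((\<lambda>i. if i = 0 then 1 else t i * fst p i), (\<lambda>j. t 0 * snd p j))"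

definition free_chart :: "nat \<Rightarrow> 'a topology \<Rightarrow> ((nat \<Rightarrow> complex) \<Rightarrow> 'a \<Rightarrow> 'a) \<Rightarrow> 'a \<Rightarrow> bool" where
  "free_chart m X act x \<longleftrightarrow>
     (\<exists>U \<Omega> h \<phi>. openin X U \<and> x \<in> U \<and> (\<forall>t\<in>torus m. \<forall>y\<in>U. act t y \<in> U) \<and>
        open \<Omega> \<and> 0 \<notin> \<Omega> \<and> (\<forall>c z. cmod c = 1 \<longrightarrow> z \<in> \<Omega> \<longrightarrow> c * z \<in> \<Omega>) \<and>
        torus_aut m \<phi> \<and>
        homeomorphic_map (subtopology X U) (subtopology cfun_top (free_model m \<Omega>)) h \<and>
        (\<forall>t\<in>torus m. \<forall>y\<in>U. h (act t y) = tmult (\<phi> t) (h y)))"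

definition vertex_chart :: "nat \<Rightarrow> 'a topology \<Rightarrow> ((nat \<Rightarrow> complex) \<Rightarrow> 'a \<Rightarrow> 'a) \<Rightarrow> 'a \<Rightarrow> bool" where
  "vertex_chart m X act x \<longleftrightarrow>
     (\<exists>U k h \<phi>. openin X U \<and> x \<in> U \<and> (\<forall>t\<in>torus m. \<forall>y\<in>U. act t y \<in> U) \<and>
        torus_aut m \<phi> \<and>
        homeomorphic_map (subtopology X U)
          (subtopology (prod_topology cfun_top cfun_top) (vertex_model m k)) h \<and>
        (\<forall>t\<in>torus m. \<forall>y\<in>U. h (act t y) = vertex_act (\<phi> t) (h y)) \<and>
        snd (h x) = (\<lambda>_. 0))"

definition loc_std_over_graph :: "nat \<Rightarrow> 'a topology \<Rightarrow> ((nat \<Rightarrow> complex) \<Rightarrow> 'a \<Rightarrow> 'a) \<Rightarrow> bool" where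
  "loc_std_over_graph m X act \<longleftrightarrow>
     1 \<le> m \<and> compact_space X \<and> Hausdorff_space X \<and> second_countable X \<and>
     continuous_map (prod_topology (torus_top m) X) X (\<lambda>(t, x). act t x) \<and>
     (\<forall>x\<in>topspace X. act tone x = x) \<and>
     (\<forall>s\<in>torus m. \<forall>t\<in>torus m. \<forall>x\<in>topspace X. act (tmult s t) x = act s (act t x)) \<and>
     (\<forall>t\<in>torus m. (\<forall>x\<in>topspace X. act t x = x) \<longrightarrow> t = tone) \<and>
     (\<exists>x\<in>topspace X. isotropy m act x = {tone}) \<and>
     (\<forall>x\<in>topspace X. free_chart m X act x \<or> vertex_chart m X act x)"

end

theory Submission
  imports Defs
begin

lemma topspace_torus_top[simp]: "topspace (torus_top m) = torus m"
  by (simp add: torus_top_def cfun_top_def)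

lemma tone_torus[simp]: "tone \<in> torus m"
  by (simp add: torus_def tone_def)

lemma torus_aut_surj:
  assumes "torus_aut m \<phi>" "\<tau> \<in> torus m"
  shows "\<exists>t\<in>torus m. \<phi> t = \<tau>"
proof -
  have "homeomorphic_map (torus_top m) (torus_top m) \<phi>" using assms(1) torus_aut_def by blast
  then have "\<phi> ` torus m = torus m"
    by (metis homeomorphic_imp_surjective_map topspace_torus_top)
  then show ?thesis using assms(2) by force
qed

lemma orbD:
  assumes orb: "\<forall>x\<in>topspace X. \<forall>y\<in>topspace X. \<pi> x = \<pi> y \<longleftrightarrow> (\<exists>t\<in>torus m. act t x = y)"
    and "x \<in> topspace X" "y \<in> topspace X" "\<pi> x = \<pi> y"
  shows "\<exists>t\<in>torus m. act t x = y"
  using orb[rule_format, OF assms(2,3)] assms(4) by simp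

lemma orbI:
  assumes orb: "\<forall>x\<in>topspace X. \<forall>y\<in>topspace X. \<pi> x = \<pi> y \<longleftrightarrow> (\<exists>t\<in>torus m. act t x = y)"
    and "x \<in> topspace X" "y \<in> topspace X" "t \<in> torus m" "act t x = y"
  shows "\<pi> x = \<pi> y"
  using orb[rule_format, OF assms(2,3)] assms(4,5) by blast

lemma local_section_generic:
  fixes X :: "'a topology" and Q :: "'b topology" and Y :: "'c topology"
  assumes quo: "quotient_map X Q \<pi>"
    and orb: "\<forall>x\<in>topspace X. \<forall>y\<in>topspace X. \<pi> x = \<pi> y \<longleftrightarrow> (\<exists>t\<in>torus m. act t x = y)"
    and U: "openin X U" "x \<in> U" and inv: "\<forall>t\<in>torus m. \<forall>y\<in>U. act t y \<in> U"
    and phi: "torus_aut m \<phi>"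
    and hh: "homeomorphic_map (subtopology X U) (subtopology Y M) h"
    and eqv: "\<forall>t\<in>torus m. \<forall>y\<in>U. h (act t y) = A (\<phi> t) (h y)"
    and Nc: "continuous_map (subtopology Y M) (subtopology Y M) N"
    and Nor: "\<forall>p\<in>M. \<exists>\<tau>\<in>torus m. N p = A \<tau> p"
    and Ninv: "\<forall>p\<in>M. \<forall>\<tau>\<in>torus m. N (A \<tau> p) = N p"
  shows "\<exists>V s. openin Q V \<and> \<pi> x \<in> V \<and> continuous_map (subtopology Q V) X s \<and> (\<forall>q\<in>V. \<pi> (s q) = q)"
proof -
  have UX: "U \<subseteq> topspace X" using U openin_subset by blast
  have surj: "\<pi> ` topspace X = topspace Q" using quo quotient_imp_surjective_map by blast
  have sat: "{y \<in> topspace X. \<pi> y \<in> \<pi> ` U} = U"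
  proof
    show "{y \<in> topspace X. \<pi> y \<in> \<pi> ` U} \<subseteq> U"
    proof clarify
      fix y u assume y: "y \<in> topspace X" "\<pi> y = \<pi> u" "u \<in> U"
      then obtain t where "t \<in> torus m" "act t u = y" using orbD[OF orb, of u y] UX by auto
      then show "y \<in> U" using inv y by blast
    qed
  next
    show "U \<subseteq> {y \<in> topspace X. \<pi> y \<in> \<pi> ` U}" using UX by blast
  qed
  have VQ: "\<pi> ` U \<subseteq> topspace Q" using surj UX by blast
  have oV: "openin Q (\<pi> ` U)"
  proof -
    have "openin X {y \<in> topspace X. \<pi> y \<in> \<pi> ` U}" using sat U by simp
    moreover have "\<forall>V. V \<subseteq> topspace Q \<longrightarrow> (openin X {x \<in> topspace X. \<pi> x \<in> V} \<longleftrightarrow> openin Q V)"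
      using quo by (simp add: quotient_map_def)
    ultimately show ?thesis using VQ by simp
  qed
  have qr: "quotient_map (subtopology X U) (subtopology Q (\<pi> ` U)) \<pi>"
    using quotient_map_restriction[OF quo sat] oV by blast
  have tsU: "topspace (subtopology X U) = U" using UX by (simp add: Int_absorb1)
  have inj: "inj_on h U" using hh tsU homeomorphic_map_def by metis
  have himg: "h ` U = topspace (subtopology Y M)"
    using hh tsU by (metis homeomorphic_imp_surjective_map)
  obtain g where hg: "homeomorphic_maps (subtopology X U) (subtopology Y M) h g"
    using hh homeomorphic_map_maps by blast
  have gc: "continuous_map (subtopology Y M) (subtopology X U) g" and gh: "\<forall>y\<in>U. g (h y) = y"
    using hg tsU unfolding homeomorphic_maps_def by auto
  have hc: "continuous_map (subtopology X U) (subtopology Y M) h"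
    using hg unfolding homeomorphic_maps_def by auto
  have hM: "\<forall>y\<in>U. h y \<in> M" using himg by auto
  define s where "s = (\<lambda>q. g (N (h (SOME y. y \<in> U \<and> \<pi> y = q))))"
  have key: "s (\<pi> y) = g (N (h y))" if "y \<in> U" for y
  proof -
    define y' where "y' = (SOME y'. y' \<in> U \<and> \<pi> y' = \<pi> y)"
    have y': "y' \<in> U" "\<pi> y' = \<pi> y" unfolding y'_def by (rule someI2[of _ y], use that in auto)+
    have yy: "y \<in> topspace X" "y' \<in> topspace X" using y' \<open>y \<in> U\<close> UX by auto
    obtain t where t: "t \<in> torus m" "act t y = y'" using orbD[OF orb yy] y' by auto
    have "\<phi> t \<in> torus m"
      using phi t(1) unfolding torus_aut_def
      by (metis homeomorphic_imp_surjective_map image_eqI topspace_torus_top)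
    then have "N (h y') = N (h y)" using eqv t Ninv hM that by metis
    then show ?thesis unfolding s_def y'_def[symmetric] by simp
  qed
  have cs: "continuous_map (subtopology Q (\<pi> ` U)) X s"
  proof (rule continuous_compose_quotient_map[OF qr])
    have "continuous_map (subtopology X U) X (g \<circ> N \<circ> h)"
      using continuous_map_compose[OF continuous_map_compose[OF hc Nc] gc]
      by (simp add: o_assoc continuous_map_into_fulltopology)
    then show "continuous_map (subtopology X U) X (s \<circ> \<pi>)"
      by (rule continuous_map_eq) (simp add: key tsU)
  qed
  have sec: "\<pi> (s q) = q" if qU: "q \<in> \<pi> ` U" for q
  proof -
    obtain y where y: "y \<in> U" "q = \<pi> y" using qU by blast
    obtain \<tau> where \<tau>: "\<tau> \<in> torus m" "N (h y) = A \<tau> (h y)" using Nor hM y by blast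
    obtain t where t: "t \<in> torus m" "\<phi> t = \<tau>" using torus_aut_surj[OF phi \<tau>(1)] by blast
    have "N (h y) = h (act t y)" using eqv t \<tau> y by metis
    then have "s q = act t y" using key y gh inv t by metis
    moreover have "act t y \<in> topspace X" using inv t y UX by blast
    moreover have "y \<in> topspace X" using y UX by blast
    ultimately show ?thesis using orbI[OF orb, of y "act t y" t] y t by simp
  qed
  show ?thesis
    apply (rule exI[of _ "\<pi> ` U"], rule exI[of _ s])
    using oV U cs sec by auto
qed

lemma cont_coord:
  "continuous_map (subtopology cfun_top M) euclidean (\<lambda>p. p i)"
  unfolding cfun_top_def by (rule continuous_map_from_subtopology, rule continuous_map_product_projection, simp)

lemma cont_ofreal_cmod: "continuous_map euclidean euclidean (\<lambda>z::complex. complex_of_real (cmod z))"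
  by (simp add: continuous_on_of_real continuous_on_norm continuous_on_id)

definition freeN :: "(nat \<Rightarrow> complex) \<Rightarrow> (nat \<Rightarrow> complex)" where
  "freeN p = (\<lambda>i. if i = 0 then complex_of_real (cmod (p 0)) else 1)"

lemma freeN_in:
  assumes "p \<in> free_model m \<Omega>" "0 \<notin> \<Omega>" "\<forall>c z. cmod c = 1 \<longrightarrow> z \<in> \<Omega> \<longrightarrow> c * z \<in> \<Omega>" "1 \<le> m"
  shows "freeN p \<in> free_model m \<Omega>"
proof -
  have p0: "p 0 \<in> \<Omega>" using assms(1) by (simp add: free_model_def)
  then have nz: "p 0 \<noteq> 0" using assms(2) by auto
  have "cmod (complex_of_real (cmod (p 0)) / p 0) = 1" using nz by (simp add: norm_divide)
  then have "(complex_of_real (cmod (p 0)) / p 0) * p 0 \<in> \<Omega>" using assms(3) p0 by blast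
  then have "complex_of_real (cmod (p 0)) \<in> \<Omega>" using nz by simp
  then show ?thesis using assms(4) by (simp add: free_model_def freeN_def)
qed

lemma freeN_cont:
  assumes "0 \<notin> \<Omega>" "\<forall>c z. cmod c = 1 \<longrightarrow> z \<in> \<Omega> \<longrightarrow> c * z \<in> \<Omega>" "1 \<le> m"
  shows "continuous_map (subtopology cfun_top (free_model m \<Omega>)) (subtopology cfun_top (free_model m \<Omega>)) freeN"
proof (rule continuous_map_into_subtopology)
  show "continuous_map (subtopology cfun_top (free_model m \<Omega>)) cfun_top freeN"
    unfolding cfun_top_def continuous_map_componentwise_UNIV
  proof
    fix i :: nat
    show "continuous_map (subtopology (product_topology (\<lambda>_. euclidean) UNIV) (free_model m \<Omega>)) euclidean (\<lambda>x. freeN x i)"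
    proof (cases "i = 0")
      case True
      have "continuous_map (subtopology cfun_top (free_model m \<Omega>)) euclidean ((\<lambda>z::complex. complex_of_real (cmod z)) \<circ> (\<lambda>p. p 0))"
        using continuous_map_compose[OF cont_coord cont_ofreal_cmod] .
      then show ?thesis using True by (simp add: freeN_def o_def cfun_top_def)
    next
      case False
      then show ?thesis by (simp add: freeN_def)
    qed
  qed
  show "freeN \<in> topspace (subtopology cfun_top (free_model m \<Omega>)) \<rightarrow> free_model m \<Omega>"
    using freeN_in[OF _ assms] by auto
qed

lemma freeN_orb:
  assumes "p \<in> free_model m \<Omega>" "0 \<notin> \<Omega>" "1 \<le> m"
  shows "\<exists>\<tau>\<in>torus m. freeN p = tmult \<tau> p"
proof -
  have p0: "p 0 \<in> \<Omega>" and pi: "\<forall>i. 1 \<le> i \<and> i < m \<longrightarrow> cmod (p i) = 1" and pm: "\<forall>i\<ge>m. p i = 1"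
    using assms(1) by (auto simp: free_model_def)
  have nz: "p 0 \<noteq> 0" using assms(2) p0 by auto
  define \<tau> where "\<tau> = (\<lambda>i. if i = 0 then complex_of_real (cmod (p 0)) / p 0 else if i < m then inverse (p i) else 1)"
  have "\<tau> \<in> torus m"
    unfolding torus_def
  proof (intro CollectI conjI allI impI)
    fix i assume "i < m"
    show "cmod (\<tau> i) = 1"
    proof (cases "i = 0")
      case True then show ?thesis using nz by (simp add: \<tau>_def norm_divide)
    next
      case False then have "cmod (p i) = 1" using pi \<open>i < m\<close> by simp
      then show ?thesis using False \<open>i < m\<close> by (simp add: \<tau>_def norm_inverse)
    qed
  next
    fix i assume "m \<le> i" then show "\<tau> i = 1" using assms(3) by (simp add: \<tau>_def)
  qed
  moreover have "freeN p = tmult \<tau> p"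
  proof
    fix i
    show "freeN p i = tmult \<tau> p i"
    proof (cases "i = 0")
      case True then show ?thesis using nz by (simp add: freeN_def tmult_def \<tau>_def)
    next
      case False
      show ?thesis
      proof (cases "i < m")
        case True
        then have "cmod (p i) = 1" using pi False by simp
        then have "p i \<noteq> 0" by (metis norm_zero zero_neq_one)
        then show ?thesis using False True by (simp add: freeN_def tmult_def \<tau>_def)
      next
        case F2: False
        then show ?thesis using False pm by (simp add: freeN_def tmult_def \<tau>_def)
      qed
    qed
  qed
  ultimately show ?thesis by blast
qed

lemma freeN_inv:
  assumes "\<tau> \<in> torus m" "1 \<le> m"
  shows "freeN (tmult \<tau> p) = freeN p"
proof -
  have "cmod (\<tau> 0) = 1" using assms by (simp add: torus_def)
  then have e: "complex_of_real (cmod (\<tau> 0 * p 0)) = complex_of_real (cmod (p 0))" by (simp add: norm_mult)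
  show ?thesis unfolding freeN_def tmult_def by (simp only: e)
qed

definition vertN :: "(nat \<Rightarrow> complex) \<times> (nat \<Rightarrow> complex) \<Rightarrow> (nat \<Rightarrow> complex) \<times> (nat \<Rightarrow> complex)" where
  "vertN p = ((\<lambda>_. 1), (\<lambda>j. complex_of_real (cmod (snd p j))))"

lemma vertN_in:
  assumes "p \<in> vertex_model m k"
  shows "vertN p \<in> vertex_model m k"
proof -
  obtain u w where p: "p = (u, w)" by fastforce
  have a: "\<forall>j\<ge>k. w j = 0" "\<forall>j. cmod (w j) < 1" "\<forall>j j'. w j \<noteq> 0 \<and> w j' \<noteq> 0 \<longrightarrow> j = j'"
    using assms p unfolding vertex_model_def by simp_all
  have "vertN p = ((\<lambda>_. 1), (\<lambda>j. complex_of_real (cmod (w j))))" by (simp add: vertN_def p)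
  moreover have "\<forall>j j'. complex_of_real (cmod (w j)) \<noteq> 0 \<and> complex_of_real (cmod (w j')) \<noteq> 0 \<longrightarrow> j = j'"
    using a(3) by simp
  ultimately show ?thesis unfolding vertex_model_def using a(1,2) by simp
qed

lemma vertN_cont:
  "continuous_map (subtopology (prod_topology cfun_top cfun_top) (vertex_model m k))
     (subtopology (prod_topology cfun_top cfun_top) (vertex_model m k)) vertN"
proof (rule continuous_map_into_subtopology)
  let ?Z = "subtopology (prod_topology cfun_top cfun_top) (vertex_model m k)"
  have s: "continuous_map ?Z cfun_top snd"
    by (simp add: continuous_map_from_subtopology continuous_map_snd)
  have "continuous_map ?Z (product_topology (\<lambda>_. euclidean) UNIV) (\<lambda>p. (\<lambda>j. complex_of_real (cmod (snd p j))))"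
    unfolding continuous_map_componentwise_UNIV
  proof
    fix j :: nat
    have "continuous_map cfun_top euclidean (\<lambda>p. p j)"
      unfolding cfun_top_def by (rule continuous_map_product_projection) simp
    then have "continuous_map ?Z euclidean ((\<lambda>z::complex. complex_of_real (cmod z)) \<circ> (\<lambda>p. p j) \<circ> snd)"
      using continuous_map_compose[OF continuous_map_compose[OF s] cont_ofreal_cmod] by (simp add: o_assoc)
    then show "continuous_map ?Z euclidean (\<lambda>p. complex_of_real (cmod (snd p j)))"
      by (simp add: o_def)
  qed
  then show "continuous_map ?Z (prod_topology cfun_top cfun_top) vertN"
    unfolding vertN_def by (simp add: continuous_map_paired cfun_top_def)
  show "vertN \<in> topspace ?Z \<rightarrow> vertex_model m k" using vertN_in by auto
qed

lemma vertN_orb: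
  assumes "p \<in> vertex_model m k" "1 \<le> m"
  shows "\<exists>\<tau>\<in>torus m. vertN p = vertex_act \<tau> p"
proof -
  obtain u w where p: "p = (u, w)" by fastforce
  have u0: "u 0 = 1" and ui: "\<forall>i. 1 \<le> i \<and> i < m \<longrightarrow> cmod (u i) = 1" and um: "\<forall>i\<ge>m. u i = 1"
    and uniq: "\<forall>j j'. w j \<noteq> 0 \<and> w j' \<noteq> 0 \<longrightarrow> j = j'"
    using assms(1) p by (auto simp: vertex_model_def)
  define j0 where "j0 = (SOME j. w j \<noteq> 0)"
  define c where "c = (if \<exists>j. w j \<noteq> 0 then complex_of_real (cmod (w j0)) / w j0 else 1)"
  have cm: "cmod c = 1"
  proof (cases "\<exists>j. w j \<noteq> 0")
    case True
    then have "w j0 \<noteq> 0" unfolding j0_def by (rule someI_ex)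
    then show ?thesis using True by (simp add: c_def norm_divide)
  qed (simp add: c_def)
  have cw: "c * w j = complex_of_real (cmod (w j))" for j
  proof (cases "w j = 0")
    case False
    then have ex: "\<exists>j. w j \<noteq> 0" by blast
    then have "w j0 \<noteq> 0" unfolding j0_def by (rule someI_ex)
    then have "j = j0" using uniq False by blast
    then show ?thesis using False ex by (simp add: c_def)
  qed simp
  define \<tau> where "\<tau> = (\<lambda>i. if i = 0 then c else if i < m then inverse (u i) else 1)"
  have "\<tau> \<in> torus m"
    unfolding torus_def
  proof (intro CollectI conjI allI impI)
    fix i assume "i < m"
    show "cmod (\<tau> i) = 1"
    proof (cases "i = 0")
      case True then show ?thesis using cm by (simp add: \<tau>_def)
    next
      case False then have "cmod (u i) = 1" using ui \<open>i < m\<close> by simp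
      then show ?thesis using False \<open>i < m\<close> by (simp add: \<tau>_def norm_inverse)
    qed
  next
    fix i assume "m \<le> i" then show "\<tau> i = 1" using assms(2) by (simp add: \<tau>_def)
  qed
  moreover have "vertN p = vertex_act \<tau> p"
  proof -
    have "(\<lambda>i. if i = 0 then 1 else \<tau> i * u i) = (\<lambda>_. 1)"
    proof
      fix i
      show "(if i = 0 then 1 else \<tau> i * u i) = 1"
      proof (cases "i = 0")
        case False
        show ?thesis
        proof (cases "i < m")
          case True
          then have "cmod (u i) = 1" using ui False by simp
          then have "u i \<noteq> 0" by (metis norm_zero zero_neq_one)
          then show ?thesis using True False by (simp add: \<tau>_def)
        next
          case F2: False then show ?thesis using False um by (simp add: \<tau>_def)
        qed
      qed simp
    qed
    moreover have "(\<lambda>j. \<tau> 0 * w j) = (\<lambda>j. complex_of_real (cmod (w j)))"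
      using cw by (simp add: \<tau>_def)
    ultimately show ?thesis unfolding vertN_def vertex_act_def p fst_conv snd_conv by (simp only:)
  qed
  ultimately show ?thesis by blast
qed

lemma vertN_inv:
  assumes "\<tau> \<in> torus m" "1 \<le> m"
  shows "vertN (vertex_act \<tau> p) = vertN p"
proof -
  have "cmod (\<tau> 0) = 1" using assms by (simp add: torus_def)
  then have e: "\<And>j. complex_of_real (cmod (\<tau> 0 * snd p j)) = complex_of_real (cmod (snd p j))" by (simp add: norm_mult)
  show ?thesis unfolding vertN_def vertex_act_def snd_conv by (simp only: e)
qed

lemma local_section:
  assumes ls: "loc_std_over_graph m X act" and quo: "quotient_map X Q \<pi>"
    and orb: "\<forall>x\<in>topspace X. \<forall>y\<in>topspace X. \<pi> x = \<pi> y \<longleftrightarrow> (\<exists>t\<in>torus m. act t x = y)"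
    and x: "x \<in> topspace X"
  shows "\<exists>V s. openin Q V \<and> \<pi> x \<in> V \<and> continuous_map (subtopology Q V) X s \<and> (\<forall>q\<in>V. \<pi> (s q) = q)"
proof -
  have m1: "1 \<le> m" using ls by (simp add: loc_std_over_graph_def)
  have "free_chart m X act x \<or> vertex_chart m X act x" using ls x by (simp add: loc_std_over_graph_def)
  then show ?thesis
  proof
    assume "free_chart m X act x"
    then obtain U \<Omega> h \<phi> where c: "openin X U" "x \<in> U" "\<forall>t\<in>torus m. \<forall>y\<in>U. act t y \<in> U"
        "open \<Omega>" "0 \<notin> \<Omega>" "\<forall>c z. cmod c = 1 \<longrightarrow> z \<in> \<Omega> \<longrightarrow> c * z \<in> \<Omega>"
        "torus_aut m \<phi>"
        "homeomorphic_map (subtopology X U) (subtopology cfun_top (free_model m \<Omega>)) h"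
        "\<forall>t\<in>torus m. \<forall>y\<in>U. h (act t y) = tmult (\<phi> t) (h y)"
      unfolding free_chart_def by blast
    show ?thesis
      apply (rule local_section_generic[OF quo orb c(1,2,3,7,8,9), where N = freeN])
      using freeN_cont[OF c(5,6) m1] freeN_orb[OF _ c(5) m1] freeN_inv[OF _ m1] by auto
  next
    assume "vertex_chart m X act x"
    then obtain U k h \<phi> where c: "openin X U" "x \<in> U" "\<forall>t\<in>torus m. \<forall>y\<in>U. act t y \<in> U"
        "torus_aut m \<phi>"
        "homeomorphic_map (subtopology X U) (subtopology (prod_topology cfun_top cfun_top) (vertex_model m k)) h"
        "\<forall>t\<in>torus m. \<forall>y\<in>U. h (act t y) = vertex_act (\<phi> t) (h y)"
      unfolding vertex_chart_def by blast
    show ?thesis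
      apply (rule local_section_generic[OF quo orb c(1-6), where N = vertN])
      using vertN_cont vertN_orb[OF _ m1] vertN_inv[OF _ m1] by auto
  qed
qed

lemma act_cont:
  assumes ls: "loc_std_over_graph m X act" and g: "g \<in> torus m"
  shows "continuous_map X X (act g)"
proof -
  have c: "continuous_map (prod_topology (torus_top m) X) X (\<lambda>(t, x). act t x)"
    using ls by (simp add: loc_std_over_graph_def)
  have "continuous_map X (prod_topology (torus_top m) X) (\<lambda>x. (g, x))"
    by (rule continuous_map_pairedI) (use g in auto)
  from continuous_map_compose[OF this c] show ?thesis by (simp add: o_def)
qed

lemma cm_top: "continuous_map X Y f \<Longrightarrow> x \<in> topspace X \<Longrightarrow> f x \<in> topspace Y"
  using continuous_map_image_subset_topspace by blast

lemma path_lift: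
  assumes ls: "loc_std_over_graph m X act" and quo: "quotient_map X Q \<pi>"
    and orb: "\<forall>x\<in>topspace X. \<forall>y\<in>topspace X. \<pi> x = \<pi> y \<longleftrightarrow> (\<exists>t\<in>torus m. act t x = y)"
    and p: "continuous_map (top_of_set {0..1::real}) Q p"
  shows "\<exists>\<sigma>. continuous_map (top_of_set {0..1}) X \<sigma> \<and> (\<forall>t\<in>{0..1}. \<pi> (\<sigma> t) = p t)"
proof -
  define LS where "LS V s \<longleftrightarrow> openin Q V \<and> continuous_map (subtopology Q V) X s \<and> (\<forall>q\<in>V. \<pi> (s q) = q)" for V s
  have surj: "\<pi> ` topspace X = topspace Q" using quo quotient_imp_surjective_map by blast
  have pQ: "p t \<in> topspace Q" if "t \<in> {0..1}" for t
    using cm_top[OF p] that by simp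
  define C where "C = {W. open W \<and> (\<exists>V s. LS V s \<and> (\<forall>r\<in>{0..1} \<inter> W. p r \<in> V))}"
  have cov: "\<exists>W\<in>C. t \<in> W" if t: "t \<in> {0..1}" for t
  proof -
    have "p t \<in> \<pi> ` topspace X" using pQ[OF t] surj by simp
    then obtain x where x: "x \<in> topspace X" "\<pi> x = p t" by (metis imageE)
    obtain V s where Vs: "openin Q V" "\<pi> x \<in> V" "continuous_map (subtopology Q V) X s" "\<forall>q\<in>V. \<pi> (s q) = q"
      using local_section[OF ls quo orb x(1)] by blast
    have "openin (top_of_set {0..1}) {r \<in> topspace (top_of_set {0..1}). p r \<in> V}"
      using openin_continuous_map_preimage[OF p Vs(1)] .
    then obtain W where W: "open W" "{r \<in> {0..1}. p r \<in> V} = {0..1} \<inter> W"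
      unfolding openin_open by auto
    have WV: "p r \<in> V" if r: "r \<in> {0..1} \<inter> W" for r
    proof -
      have "r \<in> {r \<in> {0..1}. p r \<in> V}" by (subst W(2)) (use r in simp)
      then show ?thesis by simp
    qed
    have LSV: "LS V s" unfolding LS_def using Vs by simp
    have "W \<in> C" unfolding C_def mem_Collect_eq using W(1) LSV WV by blast
    moreover have "t \<in> W"
    proof -
      have "t \<in> {r \<in> {0..1}. p r \<in> V}" using t Vs(2) x(2) by simp
      then have "t \<in> {0..1} \<inter> W" by (simp only: W(2))
      then show ?thesis by simp
    qed
    ultimately show ?thesis by (rule bexI[rotated])
  qed
  have cne: "C \<noteq> {}" using cov[of 0] by auto
  have cU: "{0..1::real} \<subseteq> \<Union> C" using cov by blast
  have copen: "\<And>B. B \<in> C \<Longrightarrow> open B" unfolding C_def by blast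
  obtain \<delta> where d: "0 < \<delta>" "\<And>T. \<lbrakk>T \<subseteq> {0..1::real}; diameter T < \<delta>\<rbrakk> \<Longrightarrow> \<exists>B\<in>C. T \<subseteq> B"
    using Lebesgue_number_lemma[OF compact_Icc cne cU copen] by auto
  have "\<exists>n::nat. n \<noteq> 0 \<and> 0 < inverse (real n) \<and> inverse (real n) < \<delta>"
    using real_arch_inverse[THEN iffD1, OF d(1)] .
  then obtain N :: nat where N: "N \<noteq> 0" "inverse (real N) < \<delta>" by blast
  have Npos: "0 < real N" using N(1) by simp
  have piece: "\<exists>V s. LS V s \<and> (\<forall>r\<in>{real k / N..real (Suc k) / N}. p r \<in> V)" if k: "k < N" for k
  proof -
    have sub: "{real k / N..real (Suc k) / N} \<subseteq> {0..1}"
      using k Npos by (auto simp: divide_le_eq_1)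
    have "diameter {real k / N..real (Suc k) / N} = inverse (real N)"
      using Npos by (simp add: diff_divide_distrib[symmetric] divide_right_mono field_simps)
    then obtain B where "B \<in> C" "{real k / N..real (Suc k) / N} \<subseteq> B"
      using d(2)[OF sub] N(2) by auto
    then show ?thesis unfolding C_def using sub by blast
  qed
  have ind: "k \<le> N \<longrightarrow> (\<exists>\<sigma>. continuous_map (top_of_set {0..real k / N}) X \<sigma> \<and> (\<forall>t\<in>{0..real k / N}. \<pi> (\<sigma> t) = p t))" for k
  proof (induction k)
    case 0
    have "p 0 \<in> \<pi> ` topspace X" using pQ[of 0] surj by simp
    then obtain x where x: "x \<in> topspace X" "\<pi> x = p 0" by (metis imageE)
    show ?case
      by (rule impI, rule exI[of _ "\<lambda>_. x"]) (use x in auto)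
  next
    case (Suc k)
    show ?case
    proof
      assume kN: "Suc k \<le> N"
      define a where "a = real k / N"
      define b where "b = real (Suc k) / N"
      have ab: "0 \<le> a" "a \<le> b" "b \<le> 1"
        unfolding a_def b_def using Npos kN by (auto simp: divide_right_mono divide_le_eq_1)
      obtain \<sigma> where \<sigma>: "continuous_map (top_of_set {0..a}) X \<sigma>" "\<forall>t\<in>{0..a}. \<pi> (\<sigma> t) = p t"
        using Suc.IH kN unfolding a_def by auto
      obtain V s where Vs: "LS V s" "\<forall>r\<in>{a..b}. p r \<in> V"
        using piece[of k] kN unfolding a_def b_def by auto
      have V: "openin Q V" "continuous_map (subtopology Q V) X s" "\<forall>q\<in>V. \<pi> (s q) = q"
        using Vs(1) unfolding LS_def by auto
      have sX: "s q \<in> topspace X" if "q \<in> V" "q \<in> topspace Q" for q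
        using cm_top[OF V(2)] that by simp
      have pa: "p a \<in> V" "p a \<in> topspace Q" using Vs(2) ab pQ by auto
      have \<sigma>a: "\<sigma> a \<in> topspace X" using cm_top[OF \<sigma>(1)] ab by simp
      obtain g where g: "g \<in> torus m" "act g (s (p a)) = \<sigma> a"
        using orbD[OF orb sX[OF pa] \<sigma>a] V(3) pa \<sigma>(2) ab by auto
      have ag: "continuous_map X X (act g)" using act_cont[OF ls g(1)] .
      define \<sigma>' where "\<sigma>' = (\<lambda>t. if t \<le> a then \<sigma> t else act g (s (p t)))"
      have c1: "continuous_map (top_of_set {0..b}) X (\<lambda>t. if id t \<le> (\<lambda>_. a) t then \<sigma> t else act g (s (p t)))"
      proof (rule continuous_map_cases_le)
        show "continuous_map (top_of_set {0..b}) euclideanreal id" by simp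
        show "continuous_map (top_of_set {0..b}) euclideanreal (\<lambda>_. a)" by simp
        have "subtopology (top_of_set {0..b}) {x \<in> topspace (top_of_set {0..b}). id x \<le> a} = top_of_set {0..a}"
          using ab by (simp add: subtopology_subtopology) (rule arg_cong[where f = "top_of_set"], auto)
        then show "continuous_map (subtopology (top_of_set {0..b}) {x \<in> topspace (top_of_set {0..b}). id x \<le> a}) X \<sigma>"
          using \<sigma>(1) by simp
        have e2: "subtopology (top_of_set {0..b}) {x \<in> topspace (top_of_set {0..b}). a \<le> id x} = top_of_set {a..b}"
          using ab by (simp add: subtopology_subtopology) (rule arg_cong[where f = "top_of_set"], auto)
        have "top_of_set {a..b} = subtopology (top_of_set {0..1}) {a..b}"
          using ab by (simp add: subtopology_subtopology Int_absorb1)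
        then have "continuous_map (top_of_set {a..b}) Q p"
          using p by (simp add: continuous_map_from_subtopology)
        then have "continuous_map (top_of_set {a..b}) (subtopology Q V) p"
          using Vs(2) by (intro continuous_map_into_subtopology) auto
        then have "continuous_map (top_of_set {a..b}) X (act g \<circ> s \<circ> p)"
          using continuous_map_compose[OF continuous_map_compose[OF _ V(2)] ag] by (simp add: o_assoc)
        then show "continuous_map (subtopology (top_of_set {0..b}) {x \<in> topspace (top_of_set {0..b}). a \<le> id x}) X (\<lambda>t. act g (s (p t)))"
          using e2 by (simp add: o_def)
        show "\<And>x. x \<in> topspace (top_of_set {0..b}) \<Longrightarrow> id x = a \<Longrightarrow> \<sigma> x = act g (s (p x))"
          using g(2) by simp
      qed
      have c2: "continuous_map (top_of_set {0..b}) X \<sigma>'"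
        using c1 unfolding \<sigma>'_def by simp
      have l2: "\<forall>t\<in>{0..b}. \<pi> (\<sigma>' t) = p t"
      proof
        fix t assume t: "t \<in> {0..b}"
        show "\<pi> (\<sigma>' t) = p t"
        proof (cases "t \<le> a")
          case True then show ?thesis using \<sigma>(2) t by (simp add: \<sigma>'_def)
        next
          case False
          then have tV: "p t \<in> V" "p t \<in> topspace Q" using Vs(2) t ab pQ by auto
          have y: "s (p t) \<in> topspace X" using sX[OF tV] .
          have y2: "act g (s (p t)) \<in> topspace X" using cm_top[OF ag y] .
          have "\<pi> (s (p t)) = \<pi> (act g (s (p t)))" using orbI[OF orb y y2 g(1)] by simp
          then show ?thesis using False V(3) tV by (simp add: \<sigma>'_def)
        qed
      qed
      show "\<exists>\<sigma>. continuous_map (top_of_set {0..real (Suc k) / N}) X \<sigma> \<and> (\<forall>t\<in>{0..real (Suc k) / N}. \<pi> (\<sigma> t) = p t)"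
        using c2 l2 unfolding b_def by blast
    qed
  qed
  show ?thesis using ind[of N] N(1) by simp
qed

lemma cis_inj01:
  fixes t t' :: real
  assumes "t \<in> {0..1}" "t' \<in> {0..1}" "cis (2 * pi * t) = cis (2 * pi * t')"
  shows "t = t' \<or> (t = 0 \<and> t' = 1) \<or> (t = 1 \<and> t' = 0)"
proof -
  have "cis (2 * pi * t - 2 * pi * t') = 1"
    using assms(3) cis_divide[of "2 * pi * t" "2 * pi * t'", symmetric] by simp
  then have "cos (2 * pi * t - 2 * pi * t') = 1" by (metis cis.sel(1) one_complex.sel(1))
  then obtain n :: int where n: "2 * pi * t - 2 * pi * t' = of_int n * 2 * pi"
    using cos_one_2pi_int by blast
  then have "2 * pi * (t - t' - of_int n) = 0" by (simp add: algebra_simps)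
  then have "t - t' - of_int n = 0" by simp
  then have "t - t' = of_int n" by simp
  moreover have "-1 \<le> t - t'" "t - t' \<le> 1" using assms(1,2) by auto
  ultimately have "-1 \<le> n" "n \<le> 1" by linarith+
  then have "n = -1 \<or> n = 0 \<or> n = 1" by linarith
  then show ?thesis using \<open>t - t' = of_int n\<close> assms(1,2) by auto
qed

lemma cis_surj01:
  assumes "cmod z = 1"
  shows "\<exists>t\<in>{0..1::real}. cis (2 * pi * t) = z"
proof -
  have z0: "z \<noteq> 0" using assms by auto
  have A: "sgn z = cis (Arg z)" "- pi < Arg z" "Arg z \<le> pi" using Arg_correct[OF z0] by auto
  have sz: "sgn z = z" using assms by (simp add: sgn_eq)
  show ?thesis
  proof (cases "0 \<le> Arg z")
    case True
    show ?thesis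
      by (rule bexI[of _ "Arg z / (2 * pi)"]) (use A sz True in \<open>auto simp: divide_simps\<close>)
  next
    case False
    have "cis (2 * pi * (Arg z / (2 * pi) + 1)) = cis (Arg z + 2 * pi)"
      by (simp add: algebra_simps)
    also have "\<dots> = cis (Arg z)" by (simp add: cis_mult[symmetric])
    finally show ?thesis
      apply (intro bexI[of _ "Arg z / (2 * pi) + 1"])
      using A sz False by (auto simp: divide_simps)
  qed
qed

theorem mainTheorem2:
  fixes X :: "'a topology" and act :: "(nat \<Rightarrow> complex) \<Rightarrow> 'a \<Rightarrow> 'a" and m :: nat
    and Q :: "'b topology" and \<pi> :: "'a \<Rightarrow> 'b"
  assumes "loc_std_over_graph m X act"
    and "quotient_map X Q \<pi>"
    and "\<forall>x\<in>topspace X. \<forall>y\<in>topspace X. \<pi> x = \<pi> y \<longleftrightarrow> (\<exists>t\<in>torus m. act t x = y)"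
    and "Q homeomorphic_space (subtopology euclidean (sphere (0::complex) 1))"
    and "\<exists>v. \<pi> ` {x \<in> topspace X. isotropy m act x \<noteq> {tone}} = {v}"
  shows "\<exists>s. continuous_map Q X s \<and> (\<forall>q\<in>topspace Q. \<pi> (s q) = q)"
proof -
  note ls = assms(1) and quo = assms(2) and orb = assms(3)
  let ?S = "top_of_set (sphere (0::complex) 1)"
  obtain f g where fg: "homeomorphic_maps Q ?S f g"
    using assms(4) homeomorphic_space_def by blast
  have fc: "continuous_map Q ?S f" and gc: "continuous_map ?S Q g"
    and gf: "\<forall>x\<in>topspace Q. g (f x) = x"
    using fg unfolding homeomorphic_maps_def by auto
  define e where "e = (\<lambda>t::real. cis (2 * pi * t))"
  have ec: "continuous_map (top_of_set {0..1}) ?S e"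
  proof (rule continuous_map_into_subtopology)
    show "continuous_map (top_of_set {0..1}) euclidean e"
      unfolding e_def by (simp add: continuous_on_cis continuous_on_mult continuous_on_const continuous_on_id)
    show "e \<in> topspace (top_of_set {0..1}) \<rightarrow> sphere 0 1" by (auto simp: e_def)
  qed
  define p where "p = g \<circ> e"
  have pc: "continuous_map (top_of_set {0..1}) Q p"
    unfolding p_def using continuous_map_compose[OF ec gc] .
  obtain \<sigma> where \<sigma>: "continuous_map (top_of_set {0..1}) X \<sigma>" "\<forall>t\<in>{0..1}. \<pi> (\<sigma> t) = p t"
    using path_lift[OF ls quo orb pc] by blast
  have \<sigma>X: "\<sigma> t \<in> topspace X" if "t \<in> {0..1}" for t
    using cm_top[OF \<sigma>(1)] that by simp
  have "\<pi> (\<sigma> 0) = \<pi> (\<sigma> 1)" using \<sigma>(2) by (simp add: p_def e_def)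
  then obtain h where h: "h \<in> torus m" "act h (\<sigma> 0) = \<sigma> 1"
    using orbD[OF orb \<sigma>X[of 0] \<sigma>X[of 1]] by auto
  define hi where "hi = (\<lambda>i. inverse (h i))"
  have hnz: "h i \<noteq> 0" for i
  proof (cases "i < m")
    case True then have "cmod (h i) = 1" using h(1) by (simp add: torus_def)
    then show ?thesis by (metis norm_zero zero_neq_one)
  next
    case False then show ?thesis using h(1) by (simp add: torus_def)
  qed
  have hit: "hi \<in> torus m" using h(1) by (simp add: torus_def hi_def norm_inverse)
  have hih: "tmult hi h = tone" using hnz by (simp add: tmult_def hi_def tone_def)
  have m1: "1 \<le> m" using ls by (simp add: loc_std_over_graph_def)
  have actc: "continuous_map (prod_topology (torus_top m) X) X (\<lambda>(t, x). act t x)"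
    and act1: "\<forall>x\<in>topspace X. act tone x = x"
    and actm: "\<forall>s\<in>torus m. \<forall>t\<in>torus m. \<forall>x\<in>topspace X. act (tmult s t) x = act s (act t x)"
    using ls by (simp_all add: loc_std_over_graph_def)
  define \<gamma> where "\<gamma> = (\<lambda>t::real. \<lambda>i. if i < m then cis (t * Arg (hi i)) else 1)"
  have \<gamma>t: "\<gamma> t \<in> torus m" for t by (simp add: \<gamma>_def torus_def)
  have \<gamma>0: "\<gamma> 0 = tone"
  proof
    fix i show "\<gamma> 0 i = tone i" by (cases "i < m") (simp_all add: \<gamma>_def tone_def)
  qed
  have \<gamma>1: "\<gamma> 1 = hi"
  proof
    fix i show "\<gamma> 1 i = hi i"
    proof (cases "i < m")
      case True
      then have "cmod (hi i) = 1" using hit by (simp add: torus_def)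
      moreover then have "hi i \<noteq> 0" by (metis norm_zero zero_neq_one)
      ultimately show ?thesis using True Arg_correct[of "hi i"] by (simp add: \<gamma>_def sgn_eq)
    next
      case False then show ?thesis using hit by (simp add: \<gamma>_def torus_def)
    qed
  qed
  have \<gamma>c: "continuous_map (top_of_set {0..1}) (torus_top m) \<gamma>"
    unfolding torus_top_def
  proof (rule continuous_map_into_subtopology)
    show "\<gamma> \<in> topspace (top_of_set {0..1}) \<rightarrow> torus m" using \<gamma>t by auto
    show "continuous_map (top_of_set {0..1}) cfun_top \<gamma>"
      unfolding cfun_top_def continuous_map_componentwise_UNIV
    proof
      fix i
      show "continuous_map (top_of_set {0..1}) euclidean (\<lambda>x. \<gamma> x i)"
        by (cases "i < m") (simp_all add: \<gamma>_def continuous_on_cis continuous_on_mult continuous_on_const continuous_on_id)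
    qed
  qed
  define \<sigma>' where "\<sigma>' = (\<lambda>t. act (\<gamma> t) (\<sigma> t))"
  have \<sigma>'c: "continuous_map (top_of_set {0..1}) X \<sigma>'"
  proof -
    have "continuous_map (top_of_set {0..1}) (prod_topology (torus_top m) X) (\<lambda>t. (\<gamma> t, \<sigma> t))"
      using \<gamma>c \<sigma>(1) by (rule continuous_map_pairedI)
    from continuous_map_compose[OF this actc] show ?thesis by (simp add: o_def \<sigma>'_def)
  qed
  have \<sigma>'p: "\<pi> (\<sigma>' t) = p t" if t: "t \<in> {0..1}" for t
  proof -
    have y2: "\<sigma>' t \<in> topspace X" using cm_top[OF \<sigma>'c] t by simp
    have "\<pi> (\<sigma> t) = \<pi> (\<sigma>' t)" using orbI[OF orb \<sigma>X[OF t] y2 \<gamma>t] by (simp add: \<sigma>'_def)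
    then show ?thesis using \<sigma>(2) t by simp
  qed
  have s0: "\<sigma>' 0 = \<sigma> 0" using act1 \<sigma>X[of 0] by (simp add: \<sigma>'_def \<gamma>0)
  have s1: "\<sigma>' 1 = \<sigma> 0"
  proof -
    have "\<sigma>' 1 = act hi (act h (\<sigma> 0))" using h(2) by (simp add: \<sigma>'_def \<gamma>1)
    also have "\<dots> = act (tmult hi h) (\<sigma> 0)" using actm hit h(1) \<sigma>X[of 0] by simp
    also have "\<dots> = \<sigma> 0" using hih act1 \<sigma>X[of 0] by simp
    finally show ?thesis .
  qed
  define \<tau> where "\<tau> = (\<lambda>z. \<sigma>' (SOME t. t \<in> {0..1} \<and> e t = z))"
  have \<tau>e: "\<tau> (e t) = \<sigma>' t" if t: "t \<in> {0..1}" for t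
  proof -
    define t' where "t' = (SOME t'. t' \<in> {0..1} \<and> e t' = e t)"
    have t': "t' \<in> {0..1}" "e t' = e t" unfolding t'_def by (rule someI2[of _ t], use t in auto)+
    then have "t' = t \<or> (t' = 0 \<and> t = 1) \<or> (t' = 1 \<and> t = 0)"
      using cis_inj01[OF t'(1) t] unfolding e_def by simp
    then have "\<sigma>' t' = \<sigma>' t" using s0 s1 by auto
    then show ?thesis unfolding \<tau>_def t'_def[symmetric] .
  qed
  have equo: "quotient_map (top_of_set {0..1}) ?S e"
  proof (rule continuous_imp_quotient_map[OF ec])
    show "compact_space (top_of_set {0..1::real})"
      by (simp add: compact_space_subtopology)
    show "Hausdorff_space ?S" by (simp add: Hausdorff_space_subtopology)
    show "e ` topspace (top_of_set {0..1}) = topspace ?S"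
    proof
      show "e ` topspace (top_of_set {0..1}) \<subseteq> topspace ?S" using continuous_map_image_subset_topspace[OF ec] .
      show "topspace ?S \<subseteq> e ` topspace (top_of_set {0..1})"
      proof
        fix z assume "z \<in> topspace ?S"
        then have "cmod z = 1" by simp
        then obtain t where "t \<in> {0..1}" "cis (2 * pi * t) = z" using cis_surj01 by blast
        then show "z \<in> e ` topspace (top_of_set {0..1})" unfolding e_def by auto
      qed
    qed
  qed
  have \<tau>c: "continuous_map ?S X \<tau>"
  proof (rule continuous_compose_quotient_map[OF equo])
    show "continuous_map (top_of_set {0..1}) X (\<tau> \<circ> e)"
      using \<sigma>'c by (rule continuous_map_eq) (simp add: \<tau>e)
  qed
  show ?thesis
  proof (intro exI conjI ballI)
    show "continuous_map Q X (\<tau> \<circ> f)" using continuous_map_compose[OF fc \<tau>c] .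
    fix q assume q: "q \<in> topspace Q"
    have "f q \<in> topspace ?S" using cm_top[OF fc q] .
    then have "cmod (f q) = 1" by simp
    then obtain t where t: "t \<in> {0..1}" "e t = f q" using cis_surj01 unfolding e_def by blast
    have "\<pi> ((\<tau> \<circ> f) q) = \<pi> (\<sigma>' t)" using \<tau>e[OF t(1)] t(2) by simp
    also have "\<dots> = p t" using \<sigma>'p[OF t(1)] .
    also have "\<dots> = q" using t(2) gf q by (simp add: p_def)
    finally show "\<pi> ((\<tau> \<circ> f) q) = q" .
  qed
qed

end
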